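(* If $C^1$ and $C^2$ are non-empty cliques of $G$, then $|C^1|<|C^2|$ if and only if $f(\mathbf{x}(C^1))<f(\mathbf{x}(C^2))$.
   Context: Let $G=(\mathcal{V},\mathcal{E})$ be a simple undirected graph on vertex set $\mathcal{V}=\{1,\dots,n\}$ with adjacency matrix $\mathbf{A}=(a_{ij})$ ($a_{ij}=1$ if $(i,j)\in\mathcal{E}$, else $0$; $a_{ii}=0$). A clique is a subset $C\subseteq\mathcal{V}$ with $(i,j)\in\mathcal{E}$ for all distinct $i,j\in C$. Let $\Delta=\{\mathbf{x}\in\mathbb{R}^n:\mathbf{0}\le\mathbf{x}\le\mathbf{1},\ \mathbf{1}^{\mathsf T}\mathbf{x}=1\}$. For a non-empty clique $C$, $\mathbf{x}(C)\in\Delta$ has $x(C)_i=1/|C|$ for $i\in C$ and $0$ otherwise. For $\mathbf{x}\in\Delta$, $\mathcal{P}(\mathbf{x})$ is the set of vectors in $\Delta$ obtained by permuting the coordinates of $\mathbf{x}$. Let $\Phi:X\to\mathbb{R}$ be twice continuously differentiable on an open set $X\supset\Delta$, satisfying for every $\mathbf{x}\in\Delta$: (C1) $\nabla^2\Phi(\mathbf{x})$ is positive semidefinite; (C2) $\|\nabla^2\Phi(\mathbf{x})\|_2<2$; (C3) $\Phi$ is constant on $\mathcal{P}(\mathbf{x})$. Define $f(\mathbf{x})=\mathbf{x}^{\mathsf T}\mathbf{A}\mathbf{x}+\Phi(\mathbf{x})$. *)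

theory Defs
  imports "HOL-Analysis.Analysis"
begin

text \<open>Vertex set {1..n} is rendered as a finite type 'n; vectors in R^n as real^'n.
  A simple undirected graph is a symmetric irreflexive relation E on 'n.\<close>

definition simple_graph :: "('n \<Rightarrow> 'n \<Rightarrow> bool) \<Rightarrow> bool" where
  "simple_graph E \<longleftrightarrow> (\<forall>i j. E i j \<longleftrightarrow> E j i) \<and> (\<forall>i. \<not> E i i)"

definition adj_matrix :: "('n::finite \<Rightarrow> 'n \<Rightarrow> bool) \<Rightarrow> real^'n^'n" where
  "adj_matrix E = (\<chi> i j. if E i j then 1 else 0)"

definition is_clique :: "('n \<Rightarrow> 'n \<Rightarrow> bool) \<Rightarrow> 'n set \<Rightarrow> bool" where
  "is_clique E C \<longleftrightarrow> (\<forall>i\<in>C. \<forall>j\<in>C. i \<noteq> j \<longrightarrow> E i j)"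

definition std_simplex :: "(real^'n::finite) set" where
  "std_simplex = {x. (\<forall>i. 0 \<le> x $ i \<and> x $ i \<le> 1) \<and> (\<Sum>i\<in>UNIV. x $ i) = 1}"

definition clique_vec :: "'n::finite set \<Rightarrow> real^'n" where
  "clique_vec C = (\<chi> i. if i \<in> C then 1 / real (card C) else 0)"

definition perm_set :: "real^'n::finite \<Rightarrow> (real^'n) set" where
  "perm_set x = {y \<in> std_simplex. \<exists>p. p permutes (UNIV::'n set) \<and> y = (\<chi> i. x $ p i)}"

definition f_obj :: "real^'n^'n \<Rightarrow> (real^'n \<Rightarrow> real) \<Rightarrow> real^'n::finite \<Rightarrow> real" where
  "f_obj A \<Phi> x = x \<bullet> (A *v x) + \<Phi> x"

end

theory Submission
  imports Defs
begin

lemma cv_nth: "clique_vec C $ i = (if i \<in> C then 1 / real (card C) else 0)"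
  by (simp add: clique_vec_def)

lemma sum_if_const: "(\<Sum>i\<in>(UNIV::'n::finite set). if i \<in> C then (a::real) else 0) = real (card C) * a"
  by (simp add: sum.If_cases)

lemma cv_sum: "(C::'n::finite set) \<noteq> {} \<Longrightarrow> (\<Sum>i\<in>UNIV. clique_vec C $ i) = 1"
  by (simp add: cv_nth sum_if_const card_gt_0_iff)

lemma cv_simplex: assumes "(C::'n::finite set) \<noteq> {}" shows "clique_vec C \<in> std_simplex"
proof -
  have "card C \<ge> 1" using assms by (simp add: Suc_le_eq card_gt_0_iff)
  then show ?thesis using cv_sum[OF assms] by (auto simp: std_simplex_def cv_nth)
qed

lemma quad:
  assumes g: "simple_graph E" and c: "is_clique E C" and ne: "(C::'n::finite set) \<noteq> {}"
  shows "clique_vec C \<bullet> (adj_matrix E *v clique_vec C) = 1 - 1 / real (card C)"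
proof -
  let ?k = "real (card C)"
  have k1: "card C \<ge> 1" using ne by (simp add: Suc_le_eq card_gt_0_iff)
  have row: "(adj_matrix E *v clique_vec C) $ i = (?k - 1) / ?k" if "i \<in> C" for i
  proof -
    have "(adj_matrix E *v clique_vec C) $ i = (\<Sum>j\<in>UNIV. if j \<in> C - {i} then 1 / ?k else 0)"
      unfolding matrix_vector_mult_def adj_matrix_def cv_nth
      apply simp
      apply (rule sum.cong, simp)
      using g c that unfolding simple_graph_def is_clique_def by auto
    also have "\<dots> = real (card (C - {i})) * (1 / ?k)" by (rule sum_if_const)
    also have "\<dots> = (?k - 1) / ?k" using that k1 by (simp add: of_nat_diff)
    finally show ?thesis .
  qed
  have "clique_vec C \<bullet> (adj_matrix E *v clique_vec C) = (\<Sum>i\<in>UNIV. if i \<in> C then 1 / ?k * ((?k - 1) / ?k) else 0)"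
    unfolding inner_vec_def cv_nth by (rule sum.cong) (auto simp: row)
  also have "\<dots> = ?k * (1 / ?k * ((?k - 1) / ?k))" by (rule sum_if_const)
  also have "\<dots> = 1 - 1 / ?k"
  proof -
    have "?k > 0" using k1 by simp
    have "\<And>k::real. k > 0 \<Longrightarrow> k * (1 / k * ((k - 1) / k)) = 1 - 1 / k"
      by (simp add: field_simps)
    then show ?thesis using \<open>?k > 0\<close> by blast
  qed
  finally show ?thesis .
qed

lemma perm_cv:
  assumes "card (C::'n::finite set) = card D"
  shows "\<exists>p. p permutes (UNIV::'n set) \<and> clique_vec C = (\<chi> i. clique_vec D $ p i)"
proof -
  obtain f where f: "bij_betw f C D" using finite_same_card_bij[of C D] assms by auto
  have "card (- C) = card (- D)" using assms by (simp add: Compl_eq_Diff_UNIV card_Diff_subset)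
  then obtain g where g: "bij_betw g (- C) (- D)" using finite_same_card_bij[of "-C" "-D"] by auto
  define p where "p = (\<lambda>i. if i \<in> C then f i else g i)"
  have "bij_betw p C D" using f by (rule bij_betw_cong[THEN iffD1, rotated]) (simp add: p_def)
  moreover have "bij_betw p (-C) (-D)" using g by (rule bij_betw_cong[THEN iffD1, rotated]) (simp add: p_def)
  ultimately have "bij_betw p (C \<union> -C) (D \<union> -D)" by (rule bij_betw_combine) auto
  then have "p permutes UNIV" by (intro bij_imp_permutes) auto
  moreover have "p i \<in> D \<longleftrightarrow> i \<in> C" for i
    using f g unfolding p_def bij_betw_def by auto
  ultimately show ?thesis using assms by (intro exI[of _ p]) (auto simp: vec_eq_iff cv_nth)
qed

lemma grad_sym:
  fixes \<Phi> :: "real^'n::finite \<Rightarrow> real" and grad :: "real^'n \<Rightarrow> real^'n"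
  assumes X_sup: "std_simplex \<subseteq> X"
    and grad: "\<And>x. x \<in> X \<Longrightarrow> (\<Phi> has_derivative (\<lambda>h. grad x \<bullet> h)) (at x)"
    and C3: "\<And>x y. x \<in> std_simplex \<Longrightarrow> y \<in> perm_set x \<Longrightarrow> \<Phi> y = \<Phi> x"
    and ij: "i \<in> T" "j \<in> T" "i \<noteq> j"
  shows "grad (clique_vec T) $ i = grad (clique_vec T) $ j"
proof -
  define y where "y = clique_vec T"
  define w where "w = axis i (1::real) - axis j 1"
  define k where "k = real (card T)"
  have "card {i,j} \<le> card T" using ij by (intro card_mono) auto
  then have k2: "k \<ge> 2" using ij by (simp add: k_def)
  have yT: "y $ l = (if l \<in> T then 1 / k else 0)" for l by (simp add: y_def k_def cv_nth)
  have wl: "w $ l = (if l = i then 1 else 0) - (if l = j then 1 else 0)" for l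
    by (simp add: w_def axis_def)
  have sumy: "(\<Sum>l\<in>UNIV. y $ l) = 1" using ij cv_sum[of T] by (auto simp: y_def)
  have sumw: "(\<Sum>l\<in>UNIV. w $ l) = 0" unfolding wl by (simp add: sum_subtractf)
  have insimp: "y + t *\<^sub>R w \<in> std_simplex" if t: "\<bar>t\<bar> < 1 / k" for t
  proof -
    have "1 / k \<le> 1 / 2" using k2 by (simp add: field_simps)
    then have "1 / k + t \<le> 1 \<and> 1 / k - t \<le> 1" using t by linarith
    then have comp: "0 \<le> (y + t *\<^sub>R w) $ l \<and> (y + t *\<^sub>R w) $ l \<le> 1" for l
      using t ij k2 by (auto simp: yT wl)
    have "(\<Sum>l\<in>UNIV. (y + t *\<^sub>R w) $ l) = (\<Sum>l\<in>UNIV. y $ l) + t * (\<Sum>l\<in>UNIV. w $ l)"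
      by (simp add: sum.distrib sum_distrib_left)
    then show ?thesis using comp sumy sumw by (simp add: std_simplex_def)
  qed
  have refl: "\<Phi> (y + (- t) *\<^sub>R w) = \<Phi> (y + t *\<^sub>R w)" if t: "\<bar>t\<bar> < 1 / k" for t
  proof (rule C3[OF insimp[OF t]])
    have "\<bar>- t\<bar> < 1 / k" using t by simp
    note s = insimp[OF this]
    have "y + (- t) *\<^sub>R w = (\<chi> l. (y + t *\<^sub>R w) $ (Transposition.transpose i j l))"
      using ij by (auto simp: vec_eq_iff yT wl Transposition.transpose_def)
    then show "y + (- t) *\<^sub>R w \<in> perm_set (y + t *\<^sub>R w)"
      unfolding perm_set_def using s permutes_swap_id[of i UNIV j] by auto
  qed
  have yX: "y \<in> X" using X_sup cv_simplex[of T] ij by (auto simp: y_def)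
  have lin1: "((\<lambda>t::real. y + t *\<^sub>R w) has_derivative (\<lambda>h. h *\<^sub>R w)) (at 0)"
    by (auto intro!: derivative_eq_intros)
  have lin2: "((\<lambda>t::real. y + (- t) *\<^sub>R w) has_derivative (\<lambda>h. (- h) *\<^sub>R w)) (at 0)"
    by (auto intro!: derivative_eq_intros)
  have D1: "((\<lambda>t::real. \<Phi> (y + t *\<^sub>R w)) has_derivative (\<lambda>h. grad y \<bullet> (h *\<^sub>R w))) (at 0)"
  proof -
    have gy: "(\<Phi> has_derivative (\<lambda>h. grad y \<bullet> h)) (at ((\<lambda>t::real. y + t *\<^sub>R w) 0))"
      using grad[OF yX] by simp
    show ?thesis by (rule has_derivative_compose[OF lin1 gy])
  qed
  have D2: "((\<lambda>t::real. \<Phi> (y + (- t) *\<^sub>R w)) has_derivative (\<lambda>h. grad y \<bullet> ((- h) *\<^sub>R w))) (at 0)"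
  proof -
    have gy: "(\<Phi> has_derivative (\<lambda>h. grad y \<bullet> h)) (at ((\<lambda>t::real. y + (- t) *\<^sub>R w) 0))"
      using grad[OF yX] by simp
    show ?thesis by (rule has_derivative_compose[OF lin2 gy])
  qed
  have D2': "((\<lambda>t::real. \<Phi> (y + t *\<^sub>R w)) has_derivative (\<lambda>h. grad y \<bullet> ((- h) *\<^sub>R w))) (at 0)"
    apply (rule has_derivative_transform_within_open[OF D2, of "ball 0 (1/k)"])
    using k2 refl by (auto simp: dist_norm)
  have "(\<lambda>h. grad y \<bullet> (h *\<^sub>R w)) = (\<lambda>h. grad y \<bullet> ((- h) *\<^sub>R w))"
    by (rule has_derivative_unique[OF D1 D2'])
  then have "grad y \<bullet> w = grad y \<bullet> (- w)" by (metis scaleR_minus1_left scaleR_one)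
  then have "grad y \<bullet> w = 0" by simp
  then show ?thesis by (simp add: w_def inner_diff_right inner_axis y_def)
qed

lemma key:
  fixes \<Phi> :: "real^'n::finite \<Rightarrow> real" and grad :: "real^'n \<Rightarrow> real^'n"
    and H :: "real^'n \<Rightarrow> real^'n^'n"
  assumes X_sup: "std_simplex \<subseteq> X"
    and grad: "\<And>x. x \<in> X \<Longrightarrow> (\<Phi> has_derivative (\<lambda>h. grad x \<bullet> h)) (at x)"
    and hess: "\<And>x. x \<in> X \<Longrightarrow> (grad has_derivative (\<lambda>h. H x *v h)) (at x)"
    and C2: "\<And>x. x \<in> std_simplex \<Longrightarrow> onorm (\<lambda>v. H x *v v) < 2"
    and C3: "\<And>x y. x \<in> std_simplex \<Longrightarrow> y \<in> perm_set x \<Longrightarrow> \<Phi> y = \<Phi> x"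
    and ST: "S \<subseteq> T" "S \<noteq> T" "S \<noteq> {}"
  shows "\<Phi> (clique_vec S) < \<Phi> (clique_vec T) + (1 / real (card S) - 1 / real (card T))"
proof -
  define y where "y = clique_vec T"
  define z where "z = clique_vec S"
  define d where "d = z - y"
  define m where "m = real (card S)"
  define k where "k = real (card T)"
  have Tne: "T \<noteq> {}" using ST by auto
  have mk: "card S < card T" using ST by (intro psubset_card_mono) auto
  have m1: "m \<ge> 1" using ST by (simp add: m_def Suc_le_eq card_gt_0_iff)
  have mk': "m < k" using mk by (simp add: m_def k_def)
  have yl: "y $ l = (if l \<in> T then 1 / k else 0)" for l by (simp add: y_def k_def cv_nth)
  have zl: "z $ l = (if l \<in> S then 1 / m else 0)" for l by (simp add: z_def m_def cv_nth)
  have dl: "d $ l = (if l \<in> S then 1 / m else 0) - (if l \<in> T then 1 / k else 0)" for l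
    by (simp add: d_def yl zl)
  have ysim: "y \<in> std_simplex" and zsim: "z \<in> std_simplex"
    using cv_simplex ST Tne by (auto simp: y_def z_def)
  have dd: "d \<bullet> d = 1 / m - 1 / k"
  proof -
    define a where "a = (1/m - 1/k)^2 - 1/k^2"
    define b where "b = 1/k^2"
    have "d \<bullet> d = (\<Sum>l\<in>UNIV. (if l \<in> S then a else 0) + (if l \<in> T then b else 0))"
      unfolding inner_vec_def
      apply (rule sum.cong, simp)
      using ST by (auto simp: dl a_def b_def power2_eq_square)
    also have "\<dots> = m * a + k * b" by (simp add: sum.distrib sum_if_const m_def k_def)
    also have "\<dots> = 1 / m - 1 / k" using m1 mk' unfolding a_def b_def
      by (simp add: field_simps power2_eq_square)
    finally show ?thesis .
  qed
  have "1 / k < 1 / m" using m1 mk' by (intro divide_strict_left_mono) auto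
  then have ddpos: "d \<bullet> d > 0" using dd by linarith
  obtain i0 where i0: "i0 \<in> T" using Tne by auto
  have gd: "grad y \<bullet> d = 0"
  proof -
    have pt: "grad y $ l * d $ l = grad y $ i0 * d $ l" for l
    proof (cases "l \<in> T")
      case True
      then show ?thesis
        using grad_sym[OF X_sup grad C3 True i0] by (cases "l = i0") (auto simp: y_def)
    next
      case False
      then have "d $ l = 0" using ST by (auto simp: dl)
      then show ?thesis by simp
    qed
    have "grad y \<bullet> d = (\<Sum>l\<in>UNIV. grad y $ i0 * d $ l)"
      unfolding inner_vec_def by (rule sum.cong[OF refl]) (simp only: pt inner_real_def)
    also have "\<dots> = grad y $ i0 * ((\<Sum>l\<in>UNIV. z $ l) - (\<Sum>l\<in>UNIV. y $ l))"
      by (simp add: sum_distrib_left[symmetric] d_def sum_subtractf)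
    also have "\<dots> = 0" using ysim zsim by (simp add: std_simplex_def)
    finally show ?thesis .
  qed
  have seg: "y + t *\<^sub>R d \<in> std_simplex" if t: "0 \<le> t" "t \<le> 1" for t
  proof -
    have e: "(y + t *\<^sub>R d) $ l = (1 - t) * y $ l + t * z $ l" for l
      by (simp add: d_def algebra_simps)
    have c: "0 \<le> (1 - t) * a + t * b \<and> (1 - t) * a + t * b \<le> 1"
      if "0 \<le> a" "a \<le> 1" "0 \<le> b" "b \<le> 1" for a b :: real
    proof
      show "0 \<le> (1 - t) * a + t * b" using t that by simp
      have "(1 - t) * a \<le> (1 - t) * 1" using t that by (intro mult_left_mono) auto
      moreover have "t * b \<le> t * 1" using t that by (intro mult_left_mono) auto
      ultimately show "(1 - t) * a + t * b \<le> 1" by simp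
    qed
    have "(\<Sum>l\<in>UNIV. (y + t *\<^sub>R d) $ l) = (1 - t) * (\<Sum>l\<in>UNIV. y $ l) + t * (\<Sum>l\<in>UNIV. z $ l)"
      unfolding e by (simp add: sum.distrib sum_distrib_left)
    moreover have "0 \<le> (y + t *\<^sub>R d) $ l \<and> (y + t *\<^sub>R d) $ l \<le> 1" for l
      unfolding e using ysim zsim by (intro c) (auto simp: std_simplex_def)
    ultimately show ?thesis using ysim zsim unfolding std_simplex_def by simp
  qed
  have segX: "y + t *\<^sub>R d \<in> X" if "0 \<le> t" "t \<le> 1" for t using seg[OF that] X_sup by auto
  define q where "q t = \<Phi> (y + t *\<^sub>R d) - t^2 * (d \<bullet> d)" for t
  define r where "r t = grad (y + t *\<^sub>R d) \<bullet> d - 2 * t * (d \<bullet> d)" for t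
  have lin: "((\<lambda>t::real. y + t *\<^sub>R d) has_derivative (\<lambda>h. h *\<^sub>R d)) (at t within {0..1})" for t
    by (auto intro!: derivative_eq_intros)
  have Dq: "(q has_derivative (\<lambda>h. h * r t)) (at t within {0..1})" if "0 \<le> t" "t \<le> 1" for t
  proof -
    have gy: "(\<Phi> has_derivative (\<lambda>h. grad (y + t *\<^sub>R d) \<bullet> h)) (at ((\<lambda>t::real. y + t *\<^sub>R d) t))"
      using grad[OF segX[OF that]] by simp
    have a: "((\<lambda>t. \<Phi> (y + t *\<^sub>R d)) has_derivative (\<lambda>h. grad (y + t *\<^sub>R d) \<bullet> (h *\<^sub>R d))) (at t within {0..1})"
      by (rule has_derivative_compose[OF lin gy])
    have b: "((\<lambda>t::real. t^2 * (d \<bullet> d)) has_derivative (\<lambda>h. h * (2 * t * (d \<bullet> d)))) (at t within {0..1})"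
      by (auto intro!: derivative_eq_intros simp: algebra_simps)
    have "(q has_derivative (\<lambda>h. grad (y + t *\<^sub>R d) \<bullet> (h *\<^sub>R d) - h * (2 * t * (d \<bullet> d)))) (at t within {0..1})"
      unfolding q_def[abs_def] by (rule has_derivative_diff[OF a b])
    then show ?thesis by (simp add: r_def algebra_simps)
  qed
  obtain s where s: "s \<in> {0<..<1}" "q 1 - q 0 = (1 - 0) * r s"
    using mvt_simple[of 0 1 q "\<lambda>t h. h * r t"] Dq by auto
  define r2 where "r2 t = (H (y + t *\<^sub>R d) *v d) \<bullet> d - 2 * (d \<bullet> d)" for t
  have Dr: "(r has_derivative (\<lambda>h. h * r2 t)) (at t within {0..s})" if "0 \<le> t" "t \<le> s" for t
  proof -
    have t1: "t \<le> 1" using that s by auto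
    have lin': "((\<lambda>t::real. y + t *\<^sub>R d) has_derivative (\<lambda>h. h *\<^sub>R d)) (at t within {0..s})"
      by (auto intro!: derivative_eq_intros)
    have gy: "(grad has_derivative (\<lambda>h. H (y + t *\<^sub>R d) *v h)) (at ((\<lambda>t::real. y + t *\<^sub>R d) t))"
      using hess[OF segX[OF that(1) t1]] by simp
    have a: "((\<lambda>t. grad (y + t *\<^sub>R d)) has_derivative (\<lambda>h. H (y + t *\<^sub>R d) *v (h *\<^sub>R d))) (at t within {0..s})"
      by (rule has_derivative_compose[OF lin' gy])
    have a2: "((\<lambda>t. grad (y + t *\<^sub>R d) \<bullet> d) has_derivative (\<lambda>h. (H (y + t *\<^sub>R d) *v (h *\<^sub>R d)) \<bullet> d)) (at t within {0..s})"
      using has_derivative_inner_left[OF a] by simp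
    have b: "((\<lambda>t::real. 2 * t * (d \<bullet> d)) has_derivative (\<lambda>h. h * (2 * (d \<bullet> d)))) (at t within {0..s})"
      by (auto intro!: derivative_eq_intros simp: algebra_simps)
    have "(r has_derivative (\<lambda>h. (H (y + t *\<^sub>R d) *v (h *\<^sub>R d)) \<bullet> d - h * (2 * (d \<bullet> d)))) (at t within {0..s})"
      unfolding r_def[abs_def] by (rule has_derivative_diff[OF a2 b])
    then show ?thesis
      by (simp add: r2_def algebra_simps matrix_vector_mult_scaleR inner_scaleR_left)
  qed
  obtain u where u: "u \<in> {0<..<s}" "r s - r 0 = r2 u * (s - 0)"
    using mvt_simple[of 0 s r "\<lambda>t h. h * r2 t"] Dr s by auto
  have r0: "r 0 = 0" using gd by (simp add: r_def)
  have "r2 u < 0"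
  proof -
    have usim: "y + u *\<^sub>R d \<in> std_simplex" using u s by (intro seg) auto
    let ?M = "H (y + u *\<^sub>R d)"
    have "(?M *v d) \<bullet> d \<le> norm (?M *v d) * norm d" by (rule norm_cauchy_schwarz)
    also have "\<dots> \<le> onorm (\<lambda>v. ?M *v v) * norm d * norm d"
      by (intro mult_right_mono onorm) auto
    also have "\<dots> < 2 * norm d * norm d"
    proof -
      have "norm d * norm d > 0" using ddpos by (simp add: inner_gt_zero_iff)
      then show ?thesis using C2[OF usim] by (simp add: mult.assoc mult_strict_right_mono)
    qed
    also have "\<dots> = 2 * (d \<bullet> d)" by (simp add: norm_eq_sqrt_inner)
    finally show ?thesis by (simp add: r2_def)
  qed
  then have "r s < 0" using u r0 by (simp add: mult_neg_pos)
  then have "q 1 < q 0" using s by simp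
  then have "\<Phi> z - (d \<bullet> d) < \<Phi> y" by (simp add: q_def d_def)
  then show ?thesis unfolding dd by (simp add: y_def z_def m_def k_def)
qed

lemma phi_eq:
  fixes \<Phi> :: "real^'n::finite \<Rightarrow> real"
  assumes C3: "\<And>x y. x \<in> std_simplex \<Longrightarrow> y \<in> perm_set x \<Longrightarrow> \<Phi> y = \<Phi> x"
    and "card C = card D" "C \<noteq> {}" "D \<noteq> {}"
  shows "\<Phi> (clique_vec C) = \<Phi> (clique_vec D)"
proof -
  obtain p where "p permutes (UNIV::'n set)" "clique_vec C = (\<chi> i. clique_vec D $ p i)"
    using perm_cv[OF assms(2)] by auto
  then have "clique_vec C \<in> perm_set (clique_vec D)"
    unfolding perm_set_def using cv_simplex[OF assms(3)] by auto
  then show ?thesis using C3 cv_simplex[OF assms(4)] by blast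
qed

lemma fval:
  assumes "simple_graph E" "is_clique E C" "C \<noteq> {}"
  shows "f_obj (adj_matrix E) \<Phi> (clique_vec C) = 1 - 1 / real (card C) + \<Phi> (clique_vec C)"
  using quad[OF assms] by (simp add: f_obj_def)

theorem proposition3:
  fixes E :: "'n::finite \<Rightarrow> 'n \<Rightarrow> bool"
    and \<Phi> :: "real^'n \<Rightarrow> real"
    and grad :: "real^'n \<Rightarrow> real^'n"
    and H :: "real^'n \<Rightarrow> real^'n^'n"
    and X :: "(real^'n) set"
    and C1 C2 :: "'n set"
  assumes graph: "simple_graph E"
    and X_open: "open X" and X_sup: "std_simplex \<subseteq> X"
    and grad: "\<And>x. x \<in> X \<Longrightarrow> (\<Phi> has_derivative (\<lambda>h. grad x \<bullet> h)) (at x)"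
    and hess: "\<And>x. x \<in> X \<Longrightarrow> (grad has_derivative (\<lambda>h. H x *v h)) (at x)"
    and hess_cont: "continuous_on X H"
    and C1: "\<And>x v. x \<in> std_simplex \<Longrightarrow> 0 \<le> v \<bullet> (H x *v v)"
    and C2: "\<And>x. x \<in> std_simplex \<Longrightarrow> onorm (\<lambda>v. H x *v v) < 2"
    and C3: "\<And>x y. x \<in> std_simplex \<Longrightarrow> y \<in> perm_set x \<Longrightarrow> \<Phi> y = \<Phi> x"
    and cl1: "is_clique E C1" "C1 \<noteq> {}"
    and cl2: "is_clique E C2" "C2 \<noteq> {}"
  shows "card C1 < card C2 \<longleftrightarrow>
     f_obj (adj_matrix E) \<Phi> (clique_vec C1) < f_obj (adj_matrix E) \<Phi> (clique_vec C2)"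
proof -
  have lt: "f_obj (adj_matrix E) \<Phi> (clique_vec A) < f_obj (adj_matrix E) \<Phi> (clique_vec B)"
    if A: "is_clique E A" "A \<noteq> {}" and B: "is_clique E B" "B \<noteq> {}" and AB: "card A < card B" for A B
  proof -
    obtain S where S: "S \<subseteq> B" "card S = card A"
      using obtain_subset_with_card_n[of "card A" B] AB by auto
    have Sne: "S \<noteq> {}" using S A by (metis card.empty card_0_eq finite)
    have SB: "S \<noteq> B" using S AB by auto
    have "\<Phi> (clique_vec A) = \<Phi> (clique_vec S)" using phi_eq[of \<Phi>, OF C3 S(2)[symmetric] A(2) Sne] .
    moreover have "\<Phi> (clique_vec S) < \<Phi> (clique_vec B) + (1 / real (card S) - 1 / real (card B))"
      by (rule key[OF X_sup grad hess C2 C3 S(1) SB Sne])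
    ultimately show ?thesis using S by (simp add: fval[OF graph A] fval[OF graph B])
  qed
  show ?thesis
  proof
    assume "card C1 < card C2" then show "f_obj (adj_matrix E) \<Phi> (clique_vec C1) < f_obj (adj_matrix E) \<Phi> (clique_vec C2)"
      using lt cl1 cl2 by blast
  next
    assume f: "f_obj (adj_matrix E) \<Phi> (clique_vec C1) < f_obj (adj_matrix E) \<Phi> (clique_vec C2)"
    show "card C1 < card C2"
    proof (rule ccontr)
      assume "\<not> card C1 < card C2"
      then consider "card C2 < card C1" | "card C1 = card C2" by linarith
      then show False
      proof cases
        case 1 then show ?thesis using lt[OF cl2 cl1] f by simp
      next
        case 2
        then show ?thesis using f phi_eq[of \<Phi>, OF C3 2 cl1(2) cl2(2)]
          by (simp add: fval[OF graph cl1] fval[OF graph cl2])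
      qed
    qed
  qed
qed

end
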